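(* Let $P,Q$ be $n\times n$ matrices with all entries in $(0,1)$, stochastic by columns (i.e. $\sum_{i=1}^nP(i,j)=\sum_{i=1}^nQ(i,j)=1$ for each $j$), and suppose that for some $\epsilon>0$, $e^{-\epsilon}\le P(i,j)/Q(i,j)\le e^{\epsilon}$ for all $i,j$. Then the maximal eigenvalue of both $P$ and $Q$ is $1$, and their associated positive right eigenvectors $u,v$ satisfy \[ d_p(u,v)\le\frac{2\epsilon}{1-\min(\tau_P,\tau_Q)}, \] where $\tau_P,\tau_Q$ are the Birkhoff contraction coefficients of $P$ and $Q$.
   Context: For $\pmb{x},\pmb{y}\in(0,\infty)^n$, the projective pseudo-distance is $d_p(\pmb{x},\pmb{y})=\max_i\log(x_i/y_i)-\min_i\log(x_i/y_i)$. For a primitive matrix $M$ (nonnegative with some power strictly positive) with primitivity index $\ell$ (the least $\ell$ with $M^\ell>0$), the Birkhoff contraction coefficient is $\tau_M=\dfrac{1-\sqrt{\theta}}{1+\sqrt{\theta}}$ with $\theta=\min_{i,j,k,l}\dfrac{M^\ell(i,j)M^\ell(k,l)}{M^\ell(i,l)M^\ell(k,j)}$. For a positive matrix, $\ell=1$. *)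

theory Defs
  imports "HOL-Analysis.Analysis"
begin

definition proj_dist :: "real^'n \<Rightarrow> real^'n \<Rightarrow> real" where
  "proj_dist x y = (MAX i. ln (x$i / y$i)) - (MIN i. ln (x$i / y$i))"

primrec mpow :: "real^'n^'n \<Rightarrow> nat \<Rightarrow> real^'n^'n" where
  "mpow M 0 = mat 1"
| "mpow M (Suc l) = M ** mpow M l"

definition positive_matrix :: "real^'n^'n \<Rightarrow> bool" where
  "positive_matrix M \<longleftrightarrow> (\<forall>i j. M$i$j > 0)"

definition nonneg_matrix :: "real^'n^'n \<Rightarrow> bool" where
  "nonneg_matrix M \<longleftrightarrow> (\<forall>i j. M$i$j \<ge> 0)"

definition primitive :: "real^'n^'n \<Rightarrow> bool" where
  "primitive M \<longleftrightarrow> nonneg_matrix M \<and> (\<exists>l. positive_matrix (mpow M l))"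

definition prim_index :: "real^'n^'n \<Rightarrow> nat" where
  "prim_index M = (LEAST l. positive_matrix (mpow M l))"

definition birkhoff_theta :: "real^'n^'n \<Rightarrow> real" where
  "birkhoff_theta M = (let A = mpow M (prim_index M) in
     (MIN (i,j,k,l). (A$i$j * A$k$l) / (A$i$l * A$k$j)))"

definition birkhoff_tau :: "real^'n^'n \<Rightarrow> real" where
  "birkhoff_tau M = (1 - sqrt (birkhoff_theta M)) / (1 + sqrt (birkhoff_theta M))"

definition col_stochastic :: "real^'n^'n \<Rightarrow> bool" where
  "col_stochastic M \<longleftrightarrow> (\<forall>j. (\<Sum>i\<in>UNIV. M$i$j) = 1)"

definition is_eigenvalue :: "real^'n^'n \<Rightarrow> complex \<Rightarrow> bool" where
  "is_eigenvalue M c \<longleftrightarrow> (\<exists>z :: 'n \<Rightarrow> complex. (\<exists>j. z j \<noteq> 0) \<and>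
      (\<forall>i. (\<Sum>j\<in>UNIV. of_real (M$i$j) * z j) = c * z i))"

definition max_eigenvalue_is :: "real^'n^'n \<Rightarrow> real \<Rightarrow> bool" where
  "max_eigenvalue_is M r \<longleftrightarrow> is_eigenvalue M (of_real r) \<and>
      (\<forall>c. is_eigenvalue M c \<longrightarrow> cmod c \<le> r)"

end

theory Submission
  imports Defs
begin

lemma key: fixes a b s r :: real
  assumes a0: "0\<le>a" and "a\<le>1" and b0: "0\<le>b" and b1: "b\<le>1" and c: "r^2 * a*(1-b) \<le> b*(1-a)" and r0: "0<r" and r1: "r\<le>1" and s1: "1\<le>s"
  shows "s*(a-b)*(1+r) \<le> (1-r)*(1-a+s*a)*(1-b+s*b)"
proof -
  define g where "g x = (1-r)*(1-x+s*x)*(1-b+s*b) - s*(x-b)*(1+r)" for x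
  define cc where "cc = (1-r)*(s-1)*(1-b+s*b) - s*(1+r)"
  have gl: "g x = g 0 + x * cc" for x unfolding g_def cc_def by (simp add: algebra_simps)
  have g0: "g 0 \<ge> 0"
    proof -
    have "(1-r)*(1-0+s*0)*(1-b+s*b) \<ge> 0" using r1 s1 b0 b1 by (simp add: mult_nonneg_nonneg)
    moreover have "s*b*(1+r) \<ge> 0" using r0 s1 b0 by simp
    ultimately show ?thesis by (simp add: g_def)
  qed
  define E where "E = r^2*(1-b)+b"
  have E0: "E > 0" proof (cases "b = 0")
    case True thus ?thesis using r0 by (simp add: E_def)
  next
    case False thus ?thesis using r0 b0 b1 unfolding E_def by (smt (verit) mult_nonneg_nonneg zero_le_power2)
  qed
  have aE: "a * E \<le> b" using c unfolding E_def by (simp add: algebra_simps)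
  have "E * g (b/E) = (1-r)*(r*(1-b) - s*b)^2"
  proof -
    have "E * g (b/E) = (1-r)*(E - b + s*b)*(1-b+s*b) - s*(b - b*E)*(1+r)"
      unfolding g_def using E0 by (simp add: field_simps)
    also have "\<dots> = (1-r)*(r*(1-b) - s*b)^2" unfolding E_def by (simp add: algebra_simps power2_eq_square)
    finally show ?thesis .
  qed
  hence "g (b/E) \<ge> 0" using E0 r1 by (metis E0 zero_le_mult_iff zero_le_power2 diff_ge_0_iff_ge linorder_not_le)
  have "g a \<ge> 0"
  proof (cases "cc \<ge> 0")
    case True thus ?thesis using gl[of a] g0 a0 by (simp add: mult_nonneg_nonneg add_nonneg_nonneg)
  next
    case False
    have "a \<le> b/E" using aE E0 by (simp add: field_simps)
    hence "a*cc \<ge> (b/E)*cc" using False by (intro mult_right_mono_neg) auto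
    thus ?thesis using gl[of a] gl[of "b/E"] \<open>g (b/E) \<ge> 0\<close> by linarith
  qed
  thus ?thesis unfolding g_def by simp
qed
lemma lnbound: fixes a b S r :: real
  assumes a0: "0\<le>a" and a1: "a\<le>1" and b0: "0\<le>b" and b1: "b\<le>1" and c: "r^2 * a*(1-b) \<le> b*(1-a)" and r0: "0<r" and r1: "r\<le>1" and S1: "1\<le>S"
  shows "ln (1-a+S*a) - ln (1-b+S*b) \<le> (1-r)/(1+r) * ln S"
proof -
  define t where "t = (1-r)/(1+r)"
  define f where "f s = t * ln s - ln (1-a+s*a) + ln (1-b+s*b)" for s
  have "f 1 \<le> f S"
  proof (rule DERIV_nonneg_imp_nondecreasing[OF S1])
    fix x assume x1: "1 \<le> x" "x \<le> S"
    have "a*(x-1) \<ge> 0" using a0 x1 by simp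
    hence A: "1-a+x*a > 0" by (simp add: algebra_simps)
    have "b*(x-1) \<ge> 0" using b0 x1 by simp
    hence B: "1-b+x*b > 0" by (simp add: algebra_simps)
    have D: "(f has_real_derivative (t / x - a/(1-a+x*a) + b/(1-b+x*b))) (at x)"
      unfolding f_def
      apply (rule derivative_eq_intros | use A B x1 in simp)+
      done
    have k: "x*(a-b)*(1+r) \<le> (1-r)*(1-a+x*a)*(1-b+x*b)"
      using key[OF a0 a1 b0 b1 c r0 r1 x1(1)] .
    have "x*(a-b) \<le> t*(1-a+x*a)*(1-b+x*b)"
      using k r0 unfolding t_def by (simp add: field_simps)
    hence h: "x*(a-b) \<le> (t*(1-a+x*a)*(1-b+x*b))" .
    have e: "a/(1-a+x*a) - b/(1-b+x*b) = (a-b)/((1-a+x*a)*(1-b+x*b))"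
      using A B by (simp add: field_simps)
    have "(a-b)/((1-a+x*a)*(1-b+x*b)) \<le> t / x"
      using h A B x1 by (simp add: divide_le_eq le_divide_eq mult_ac)
    hence "a/(1-a+x*a) - b/(1-b+x*b) \<le> t / x" using e by simp
    thus "\<exists>y. (f has_real_derivative y) (at x) \<and> 0 \<le> y" using D by (intro exI[of _ "t / x - a/(1-a+x*a) + b/(1-b+x*b)"]) auto
  qed
  thus ?thesis unfolding f_def t_def by simp
qed
lemma dsum: "c * ((\<Sum>j\<in>A. f j) * (\<Sum>l\<in>B. g l)) = (\<Sum>j\<in>A. \<Sum>l\<in>B. c * (f j * g l))"
  for c :: real by (subst sum_product) (simp add: sum_distrib_left)

lemma rowpair:
  fixes a b x y :: "'n::finite \<Rightarrow> real" and m M \<theta> :: real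
  assumes apos: "\<forall>j. a j > 0" and bpos: "\<forall>j. b j > 0" and ypos: "\<forall>j. y j > 0"
    and xb: "\<forall>j. m * y j \<le> x j \<and> x j \<le> M * y j" and m0: "0 < m"
    and th: "\<forall>j l. \<theta> * (a j * b l) \<le> b j * a l" and th0: "0 < \<theta>" and th1: "\<theta> \<le> 1"
  shows "ln ((\<Sum>j\<in>UNIV. a j * x j) / (\<Sum>j\<in>UNIV. a j * y j)) - ln ((\<Sum>j\<in>UNIV. b j * x j) / (\<Sum>j\<in>UNIV. b j * y j))
    \<le> (1 - sqrt \<theta>) / (1 + sqrt \<theta>) * ln (M / m)"
proof -
  define r where "r = sqrt \<theta>"
  have r0: "0 < r" and r1: "r \<le> 1" and r2: "r^2 = \<theta>" using th0 th1 unfolding r_def by auto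
  define Sa where "Sa = (\<Sum>j\<in>UNIV. a j * y j)"
  define Sb where "Sb = (\<Sum>j\<in>UNIV. b j * y j)"
  have Sa0: "Sa > 0" unfolding Sa_def using apos ypos by (intro sum_pos) auto
  have Sb0: "Sb > 0" unfolding Sb_def using bpos ypos by (intro sum_pos) auto
  show ?thesis
  proof (cases "M \<le> m")
    case True
    hence xe: "x j = m * y j" for j using xb ypos
      by (smt (verit, best) mult_right_mono)
    have "(\<Sum>j\<in>UNIV. a j * x j) = m * Sa" unfolding Sa_def xe by (simp add: sum_distrib_left mult_ac)
    moreover have "(\<Sum>j\<in>UNIV. b j * x j) = m * Sb" unfolding Sb_def xe by (simp add: sum_distrib_left mult_ac)
    moreover have "M = m" using True xb ypos m0
      by (metis (no_types, opaque_lifting) dual_order.trans mult_le_cancel_right linorder_not_le order_antisym)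
    ultimately show ?thesis using Sa0 Sb0 by (simp add: Sa_def Sb_def)
  next
    case False
    hence Mm: "M > m" by simp
    define w where "w j = (x j - m * y j) / (M - m)" for j
    have w0: "0 \<le> w j" for j unfolding w_def using xb Mm by simp
    have wy: "w j \<le> y j" for j
    proof -
      have "x j - m * y j \<le> (M - m) * y j" using xb by (simp add: algebra_simps)
      thus ?thesis unfolding w_def using Mm by (simp add: divide_le_eq mult_ac)
    qed
    have xw: "x j = m * y j + (M - m) * w j" for j unfolding w_def using Mm by simp
    define s where "s = M / m"
    have s1: "1 \<le> s" unfolding s_def using Mm m0 by simp
    define \<alpha> where "\<alpha> = (\<Sum>j\<in>UNIV. a j * w j) / Sa"
    define \<beta> where "\<beta> = (\<Sum>j\<in>UNIV. b j * w j) / Sb"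
    have Aw0: "(\<Sum>j\<in>UNIV. a j * w j) \<ge> 0" using apos w0 by (intro sum_nonneg) (simp add: less_imp_le)
    have Bw0: "(\<Sum>j\<in>UNIV. b j * w j) \<ge> 0" using bpos w0 by (intro sum_nonneg) (simp add: less_imp_le)
    have Awy: "(\<Sum>j\<in>UNIV. a j * w j) \<le> Sa" unfolding Sa_def using apos wy
      by (intro sum_mono) (simp add: less_imp_le mult_left_mono)
    have Bwy: "(\<Sum>j\<in>UNIV. b j * w j) \<le> Sb" unfolding Sb_def using bpos wy
      by (intro sum_mono) (simp add: less_imp_le mult_left_mono)
    have a0: "0 \<le> \<alpha>" and a1: "\<alpha> \<le> 1" unfolding \<alpha>_def using Aw0 Awy Sa0 by auto
    have b0: "0 \<le> \<beta>" and b1: "\<beta> \<le> 1" unfolding \<beta>_def using Bw0 Bwy Sb0 by auto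
    have Ax: "(\<Sum>j\<in>UNIV. a j * x j) = m * Sa + (M - m) * (\<Sum>j\<in>UNIV. a j * w j)"
    proof -
      have "(\<Sum>j\<in>UNIV. a j * x j) = (\<Sum>j\<in>UNIV. m * (a j * y j) + (M - m) * (a j * w j))"
        by (rule sum.cong) (simp_all add: xw algebra_simps)
      thus ?thesis unfolding Sa_def by (simp add: sum.distrib sum_distrib_left)
    qed
    have Bx: "(\<Sum>j\<in>UNIV. b j * x j) = m * Sb + (M - m) * (\<Sum>j\<in>UNIV. b j * w j)"
    proof -
      have "(\<Sum>j\<in>UNIV. b j * x j) = (\<Sum>j\<in>UNIV. m * (b j * y j) + (M - m) * (b j * w j))"
        by (rule sum.cong) (simp_all add: xw algebra_simps)
      thus ?thesis unfolding Sb_def by (simp add: sum.distrib sum_distrib_left)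
    qed
    have ra: "(\<Sum>j\<in>UNIV. a j * x j) / Sa = m * (1 - \<alpha> + s * \<alpha>)"
      unfolding Ax \<alpha>_def s_def using Sa0 m0 by (simp add: field_simps)
    have rb: "(\<Sum>j\<in>UNIV. b j * x j) / Sb = m * (1 - \<beta> + s * \<beta>)"
      unfolding Bx \<beta>_def s_def using Sb0 m0 by (simp add: field_simps)
    have pa: "1 - \<alpha> + s * \<alpha> > 0"
    proof - have "\<alpha>*(s-1) \<ge> 0" using a0 s1 by simp thus ?thesis by (simp add: algebra_simps) qed
    have pb: "1 - \<beta> + s * \<beta> > 0"
    proof - have "\<beta>*(s-1) \<ge> 0" using b0 s1 by simp thus ?thesis by (simp add: algebra_simps) qed
    have cross: "\<theta> * ((\<Sum>j\<in>UNIV. a j * w j) * (\<Sum>l\<in>UNIV. b l * (y l - w l)))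
        \<le> (\<Sum>j\<in>UNIV. b j * w j) * (\<Sum>l\<in>UNIV. a l * (y l - w l))"
    proof -
      have "\<theta> * ((\<Sum>j\<in>UNIV. a j * w j) * (\<Sum>l\<in>UNIV. b l * (y l - w l)))
          = (\<Sum>j\<in>UNIV. \<Sum>l\<in>UNIV. \<theta> * ((a j * w j) * (b l * (y l - w l))))"
        by (rule dsum)
      also have "\<dots> \<le> (\<Sum>j\<in>UNIV. \<Sum>l\<in>UNIV. 1 * ((b j * w j) * (a l * (y l - w l))))"
      proof (intro sum_mono)
        fix j l
        have "\<theta> * (a j * b l) * (w j * (y l - w l)) \<le> (b j * a l) * (w j * (y l - w l))"
          using th w0[of j] wy[of l] by (intro mult_right_mono) auto
        thus "\<theta> * ((a j * w j) * (b l * (y l - w l))) \<le> 1 * ((b j * w j) * (a l * (y l - w l)))"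
          by (simp add: mult_ac)
      qed
      also have "\<dots> = (\<Sum>j\<in>UNIV. b j * w j) * (\<Sum>l\<in>UNIV. a l * (y l - w l))"
        using dsum[of 1 "\<lambda>j. b j * w j" UNIV "\<lambda>l. a l * (y l - w l)" UNIV] by simp
      finally show ?thesis .
    qed
    have ya: "(\<Sum>l\<in>UNIV. a l * (y l - w l)) = Sa - (\<Sum>j\<in>UNIV. a j * w j)"
      unfolding Sa_def by (simp add: algebra_simps sum_subtractf)
    have yb: "(\<Sum>l\<in>UNIV. b l * (y l - w l)) = Sb - (\<Sum>j\<in>UNIV. b j * w j)"
      unfolding Sb_def by (simp add: algebra_simps sum_subtractf)
    have c: "r^2 * \<alpha> * (1 - \<beta>) \<le> \<beta> * (1 - \<alpha>)"
    proof -
      have "r^2 * \<alpha> * (1 - \<beta>) = \<theta> * ((\<Sum>j\<in>UNIV. a j * w j) * (\<Sum>l\<in>UNIV. b l * (y l - w l))) / (Sa * Sb)"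
        unfolding r2 \<alpha>_def \<beta>_def yb using Sa0 Sb0 by (simp add: field_simps)
      also have "\<dots> \<le> (\<Sum>j\<in>UNIV. b j * w j) * (\<Sum>l\<in>UNIV. a l * (y l - w l)) / (Sa * Sb)"
        using cross Sa0 Sb0 by (simp add: divide_right_mono)
      also have "\<dots> = \<beta> * (1 - \<alpha>)"
        unfolding \<alpha>_def \<beta>_def ya using Sa0 Sb0 by (simp add: field_simps)
      finally show ?thesis .
    qed
    have L: "ln (1-\<alpha>+s*\<alpha>) - ln (1-\<beta>+s*\<beta>) \<le> (1-r)/(1+r) * ln s"
      using lnbound[OF a0 a1 b0 b1 c r0 r1 s1] .
    have "ln ((\<Sum>j\<in>UNIV. a j * x j) / Sa) - ln ((\<Sum>j\<in>UNIV. b j * x j) / Sb)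
        = ln (1-\<alpha>+s*\<alpha>) - ln (1-\<beta>+s*\<beta>)"
      unfolding ra rb using m0 pa pb by (simp add: ln_mult)
    thus ?thesis using L unfolding Sa_def Sb_def r_def s_def by simp
  qed
qed


lemma nullvec: fixes A :: "real^'n^'n"
  assumes "x \<noteq> 0" "transpose A *v x = 0" shows "\<exists>y. y \<noteq> 0 \<and> A *v y = 0"
  by (metis assms(1,2) matrix_nonfull_linear_equations_eq rank_transpose)

lemma mv_comp: "(A *v x) $ i = (\<Sum>j\<in>UNIV. A$i$j * x$j)"
  by (simp add: matrix_vector_mult_def)

lemma maxmin_tri:
  fixes f g h :: "'n::finite \<Rightarrow> real"
  assumes "\<And>i. h i = f i + g i"
  shows "(MAX i. h i) - (MIN i. h i) \<le> ((MAX i. f i) - (MIN i. f i)) + ((MAX i. g i) - (MIN i. g i))"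
proof -
  have "(MAX i. h i) \<in> range h" by (rule Max_in) auto
  then obtain i where i: "h i = (MAX i. h i)" by (metis rangeE)
  have "(MIN i. h i) \<in> range h" by (rule Min_in) auto
  then obtain k where k: "h k = (MIN i. h i)" by (metis rangeE)
  have "f i \<le> (MAX i. f i)" "g i \<le> (MAX i. g i)" "(MIN i. f i) \<le> f k" "(MIN i. g i) \<le> g k"
    by (auto intro: Max_ge Min_le)
  thus ?thesis using i k assms[of i] assms[of k] by linarith
qed

lemma pd_tri:
  fixes x y z :: "real^'n"
  assumes "\<forall>i. x$i > 0" "\<forall>i. y$i > 0" "\<forall>i. z$i > 0"
  shows "proj_dist x z \<le> proj_dist x y + proj_dist y z"
  unfolding proj_dist_def
proof (rule maxmin_tri)
  fix i
  have "x$i > 0" "y$i > 0" "z$i > 0" using assms by auto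
  thus "ln (x$i / z$i) = ln (x$i / y$i) + ln (y$i / z$i)" by (simp add: ln_div)
qed

lemma pd_le:
  fixes x y :: "real^'n"
  assumes "\<forall>i. \<bar>ln (x$i / y$i)\<bar> \<le> e"
  shows "proj_dist x y \<le> 2 * e"
proof -
  have "(MAX i. ln (x$i / y$i)) \<le> e" using assms by (simp add: Max_le_iff abs_le_iff)
  moreover have "\<forall>i. -e \<le> ln (x$i / y$i)" proof
    fix i show "-e \<le> ln (x$i / y$i)" using assms[rule_format, of i] by linarith
  qed
  hence "-e \<le> (MIN i. ln (x$i / y$i))" by (simp add: Min_ge_iff)
  ultimately show ?thesis unfolding proj_dist_def by linarith
qed

lemma birkhoff:
  fixes A :: "real^'n^'n" and x y :: "real^'n"
  assumes pos: "\<forall>i j. A$i$j > 0"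
    and th: "\<forall>i j k l. \<theta> * (A$i$l * A$k$j) \<le> A$i$j * A$k$l" and th0: "0 < \<theta>" and th1: "\<theta> \<le> 1"
    and xp: "\<forall>i. x$i > 0" and yp: "\<forall>i. y$i > 0"
  shows "proj_dist (A *v x) (A *v y) \<le> (1 - sqrt \<theta>) / (1 + sqrt \<theta>) * proj_dist x y"
proof -
  define L where "L j = ln (x$j / y$j)" for j
  define m where "m = exp (MIN j. L j)"
  define M where "M = exp (MAX j. L j)"
  have m0: "0 < m" unfolding m_def by simp
  have xb: "\<forall>j. m * y$j \<le> x$j \<and> x$j \<le> M * y$j"
  proof
    fix j
    have e: "exp (L j) = x$j / y$j" unfolding L_def using xp yp by simp
    have "m \<le> exp (L j)" "exp (L j) \<le> M" unfolding m_def M_def by (auto intro: Min_le Max_ge)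
    thus "m * y$j \<le> x$j \<and> x$j \<le> M * y$j" using e yp[rule_format, of j]
      by (simp add: le_divide_eq divide_le_eq)
  qed
  have lnMm: "ln (M / m) = proj_dist x y" unfolding M_def m_def proj_dist_def L_def
    by (simp add: ln_div)
  define G where "G i = ln ((A *v x)$i / (A *v y)$i)" for i
  have "(MAX i. G i) \<in> range G" by (rule Max_in) auto
  then obtain i where i: "G i = (MAX i. G i)" by (metis rangeE)
  have "(MIN i. G i) \<in> range G" by (rule Min_in) auto
  then obtain k where k: "G k = (MIN i. G i)" by (metis rangeE)
  have "G i - G k \<le> (1 - sqrt \<theta>) / (1 + sqrt \<theta>) * ln (M / m)"
    unfolding G_def mv_comp
  proof (rule rowpair[where a="\<lambda>j. A$i$j" and b="\<lambda>j. A$k$j" and x="\<lambda>j. x$j" and y="\<lambda>j. y$j"])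
    show "\<forall>j. 0 < A$i$j" "\<forall>j. 0 < A$k$j" "\<forall>j. 0 < y$j" using pos yp by auto
    show "\<forall>j. m * y$j \<le> x$j \<and> x$j \<le> M * y$j" by (rule xb)
    show "0 < m" "0 < \<theta>" "\<theta> \<le> 1" by (fact m0, fact th0, fact th1)
    show "\<forall>j l. \<theta> * (A$i$j * A$k$l) \<le> A$k$j * A$i$l"
    proof (intro allI)
      fix j l
      have "\<theta> * (A$k$l * A$i$j) \<le> A$k$j * A$i$l" using th by blast
      thus "\<theta> * (A$i$j * A$k$l) \<le> A$k$j * A$i$l" by (simp only: mult.commute[of "A$k$l"])
    qed
  qed
  thus ?thesis using i k lnMm unfolding proj_dist_def G_def by (simp only:)
qed



lemma two_idx:
  fixes P :: "real^'n^'n"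
  assumes P01: "\<forall>i j. 0 < P$i$j \<and> P$i$j < 1" and Pst: "col_stochastic P"
  shows "\<exists>i j :: 'n. i \<noteq> j"
proof (rule ccontr)
  assume "\<not> (\<exists>i j :: 'n. i \<noteq> j)"
  hence all: "\<And>i j::'n. i = j" by blast
  fix j :: 'n
  have "UNIV = {j}" using all by auto
  moreover have "(\<Sum>i\<in>{j}. P$i$j) = P$j$j" by simp
  ultimately have "(\<Sum>i\<in>UNIV. P$i$j) = P$j$j" by metis
  thus False using Pst P01 unfolding col_stochastic_def by (metis less_irrefl)
qed

lemma theta_props:
  fixes P :: "real^'n^'n"
  assumes pos: "\<forall>i j. P$i$j > 0" and two: "\<exists>i j :: 'n. i \<noteq> j"
  shows "birkhoff_theta P > 0" "birkhoff_theta P \<le> 1"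
    "\<forall>i j k l. birkhoff_theta P * (P$i$l * P$k$j) \<le> P$i$j * P$k$l"
proof -
  have pi: "prim_index P = 1"
    unfolding prim_index_def
  proof (rule Least_equality)
    show "positive_matrix (mpow P 1)" using pos by (simp add: positive_matrix_def)
    fix l assume "positive_matrix (mpow P l)"
    moreover obtain i j :: 'n where "i \<noteq> j" using two by blast
    ultimately have "l \<noteq> 0"
    proof -
      assume pm: "positive_matrix (mpow P l)" and ij: "i \<noteq> j"
      show "l \<noteq> 0"
      proof
        assume "l = 0"
        hence "mpow P l $ i $ j = 0" using ij by (simp add: mat_def)
        thus False using pm unfolding positive_matrix_def by (metis less_irrefl)
      qed
    qed
    thus "1 \<le> l" by simp
  qed
  define f where "f = (\<lambda>(i::'n,j::'n,k::'n,l::'n). (P$i$j * P$k$l) / (P$i$l * P$k$j))"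
  have bt: "birkhoff_theta P = Min (range f)"
    unfolding birkhoff_theta_def pi f_def by simp
  have fin: "finite (range f)" by simp
  have ne: "range f \<noteq> {}" by simp
  have "Min (range f) \<in> range f" using fin ne by (rule Min_in)
  then obtain q where q: "Min (range f) = f q" by (metis rangeE)
  obtain i j k l where "q = (i,j,k,l)" by (cases q) auto
  hence "f q > 0" using pos unfolding f_def by simp
  thus "birkhoff_theta P > 0" using bt q by simp
  obtain i0 :: 'n where True by simp
  have "f (i0,i0,i0,i0) = 1" unfolding f_def using pos by (simp add: less_imp_neq[symmetric])
  hence "Min (range f) \<le> 1" using fin by (metis Min_le rangeI)
  thus "birkhoff_theta P \<le> 1" using bt by simp
  show "\<forall>i j k l. birkhoff_theta P * (P$i$l * P$k$j) \<le> P$i$j * P$k$l"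
  proof (intro allI)
    fix i j k l
    have "Min (range f) \<le> f (i,j,k,l)" using fin by (rule Min_le) simp
    hence "birkhoff_theta P \<le> (P$i$j * P$k$l) / (P$i$l * P$k$j)" using bt unfolding f_def by simp
    moreover have "P$i$l * P$k$j > 0" using pos by simp
    ultimately show "birkhoff_theta P * (P$i$l * P$k$j) \<le> P$i$j * P$k$l" by (simp add: le_divide_eq)
  qed
qed

lemma max_eig:
  fixes P :: "real^'n^'n"
  assumes nn: "\<forall>i j. 0 \<le> P$i$j" and Pst: "col_stochastic P"
  shows "max_eigenvalue_is P 1"
  unfolding max_eigenvalue_is_def
proof
  have cs: "(\<Sum>j\<in>UNIV. (P - mat 1)$j$i) = 0" for i
  proof -
    have "(\<Sum>j\<in>UNIV. (P - mat 1)$j$i) = (\<Sum>j\<in>UNIV. P$j$i) - (\<Sum>j\<in>UNIV. (mat 1 :: real^'n^'n)$j$i)"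
      by (simp add: sum_subtractf)
    also have "(\<Sum>j\<in>UNIV. (mat 1 :: real^'n^'n)$j$i) = 1" by (simp add: mat_def)
    finally show ?thesis using Pst unfolding col_stochastic_def by simp
  qed
  have "transpose (P - mat 1) *v (\<chi> i. 1) = 0"
    using cs by (simp add: vec_eq_iff matrix_vector_mult_def transpose_def del: vector_minus_component)
  moreover have "((\<chi> i. 1) :: real^'n) \<noteq> 0" by (simp add: vec_eq_iff)
  ultimately obtain y where y: "y \<noteq> 0" "(P - mat 1) *v y = 0" using nullvec by blast
  have "P *v y = y" using y(2) by (simp add: matrix_vector_mult_diff_rdistrib)
  hence e: "\<forall>i. (\<Sum>j\<in>UNIV. P$i$j * y$j) = y$i" by (simp add: vec_eq_iff matrix_vector_mult_def)
  show "is_eigenvalue P (of_real 1)"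
    unfolding is_eigenvalue_def
  proof (rule exI[of _ "\<lambda>j. complex_of_real (y$j)"], intro conjI allI)
    show "\<exists>j. complex_of_real (y$j) \<noteq> 0" using y(1) by (simp add: vec_eq_iff)
    fix i
    have "(\<Sum>j\<in>UNIV. complex_of_real (P$i$j) * complex_of_real (y$j)) = complex_of_real (\<Sum>j\<in>UNIV. P$i$j * y$j)"
      by simp
    thus "(\<Sum>j\<in>UNIV. complex_of_real (P$i$j) * complex_of_real (y$j)) = of_real 1 * complex_of_real (y$i)"
      using e by simp
  qed
  show "\<forall>c. is_eigenvalue P c \<longrightarrow> cmod c \<le> 1"
  proof (intro allI impI)
    fix c assume "is_eigenvalue P c"
    then obtain z :: "'n \<Rightarrow> complex" where z: "\<exists>j. z j \<noteq> 0" "\<forall>i. (\<Sum>j\<in>UNIV. of_real (P$i$j) * z j) = c * z i"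
      unfolding is_eigenvalue_def by blast
    have "cmod c * (\<Sum>i\<in>UNIV. cmod (z i)) = (\<Sum>i\<in>UNIV. cmod (c * z i))"
      by (simp add: sum_distrib_left norm_mult)
    also have "\<dots> = (\<Sum>i\<in>UNIV. cmod (\<Sum>j\<in>UNIV. of_real (P$i$j) * z j))" using z(2) by simp
    also have "\<dots> \<le> (\<Sum>i\<in>UNIV. \<Sum>j\<in>UNIV. P$i$j * cmod (z j))"
    proof (rule sum_mono)
      fix i
      have "cmod (\<Sum>j\<in>UNIV. of_real (P$i$j) * z j) \<le> (\<Sum>j\<in>UNIV. cmod (of_real (P$i$j) * z j))"
        by (rule norm_sum)
      also have "\<dots> = (\<Sum>j\<in>UNIV. P$i$j * cmod (z j))" using nn by (simp add: norm_mult)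
      finally show "cmod (\<Sum>j\<in>UNIV. of_real (P$i$j) * z j) \<le> (\<Sum>j\<in>UNIV. P$i$j * cmod (z j))" .
    qed
    also have "\<dots> = (\<Sum>j\<in>UNIV. (\<Sum>i\<in>UNIV. P$i$j) * cmod (z j))"
      by (subst sum.swap) (simp add: sum_distrib_right)
    also have "\<dots> = (\<Sum>j\<in>UNIV. cmod (z j))" using Pst unfolding col_stochastic_def by simp
    finally have h: "cmod c * (\<Sum>i\<in>UNIV. cmod (z i)) \<le> 1 * (\<Sum>i\<in>UNIV. cmod (z i))" by simp
    obtain j where "z j \<noteq> 0" using z(1) by blast
    hence "(\<Sum>i\<in>UNIV. cmod (z i)) > 0"
      by (intro sum_pos2[where i=j]) auto
    thus "cmod c \<le> 1" using h by (simp add: mult_le_cancel_right)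
  qed
qed



lemma ln_ratio_bound:
  fixes a b e :: real
  assumes "a > 0" "b > 0" "a \<le> exp e * b" "b \<le> exp e * a"
  shows "\<bar>ln (a / b)\<bar> \<le> e"
proof -
  have "ln (a / b) \<le> e"
  proof -
    have "a / b \<le> exp e" using assms by (simp add: divide_le_eq)
    hence "ln (a / b) \<le> ln (exp e)" using assms by (intro ln_mono) auto
    thus ?thesis by simp
  qed
  moreover have "ln (b / a) \<le> e"
  proof -
    have "b / a \<le> exp e" using assms by (simp add: divide_le_eq)
    hence "ln (b / a) \<le> ln (exp e)" using assms by (intro ln_mono) auto
    thus ?thesis by simp
  qed
  moreover have "ln (b / a) = - ln (a / b)" using assms by (simp add: ln_div)
  ultimately show ?thesis by linarith
qed

lemma mv_pos:
  fixes A :: "real^'n^'n" and v :: "real^'n"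
  assumes "\<forall>i j. A$i$j > 0" "\<forall>i. v$i > 0"
  shows "\<forall>i. (A *v v)$i > 0"
  using assms by (auto simp: mv_comp intro!: sum_pos)

lemma pd_PQ:
  fixes P Q :: "real^'n^'n" and v :: "real^'n"
  assumes P: "\<forall>i j. P$i$j > 0" and Q: "\<forall>i j. Q$i$j > 0" and vp: "\<forall>i. v$i > 0"
    and ratio: "\<forall>i j. exp (-\<epsilon>) \<le> P$i$j / Q$i$j \<and> P$i$j / Q$i$j \<le> exp \<epsilon>"
  shows "proj_dist (P *v v) (Q *v v) \<le> 2 * \<epsilon>"
proof (rule pd_le, intro allI)
  fix i
  have PQ: "P$i$j \<le> exp \<epsilon> * Q$i$j" for j
    using ratio Q by (meson divide_le_eq)
  have QP: "Q$i$j \<le> exp \<epsilon> * P$i$j" for j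
  proof -
    have "exp (-\<epsilon>) * Q$i$j \<le> P$i$j" using ratio Q by (meson le_divide_eq)
    hence "exp \<epsilon> * (exp (-\<epsilon>) * Q$i$j) \<le> exp \<epsilon> * P$i$j" by simp
    thus ?thesis by (simp add: exp_minus field_simps)
  qed
  have "(P *v v)$i \<le> exp \<epsilon> * (Q *v v)$i"
    unfolding mv_comp sum_distrib_left using PQ vp
    by (intro sum_mono) (metis mult.assoc mult_right_mono less_imp_le)
  moreover have "(Q *v v)$i \<le> exp \<epsilon> * (P *v v)$i"
    unfolding mv_comp sum_distrib_left using QP vp
    by (intro sum_mono) (metis mult.assoc mult_right_mono less_imp_le)
  ultimately show "\<bar>ln ((P *v v)$i / (Q *v v)$i)\<bar> \<le> \<epsilon>"
    using mv_pos[OF P vp] mv_pos[OF Q vp] by (intro ln_ratio_bound) auto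
qed

lemma tau_lt1: assumes "0 < t" shows "(1 - sqrt t) / (1 + sqrt t) < 1"
proof -
  have "sqrt t > 0" using assms by simp
  hence pos: "1 + sqrt t > 0" by linarith
  have "1 - sqrt t < 1 + sqrt t" using \<open>sqrt t > 0\<close> by linarith
  thus ?thesis using divide_less_eq_1_pos[OF pos] by blast
qed

theorem propositionA1:
  fixes P Q :: "real^'n^'n" and \<epsilon> :: real
  assumes P01: "\<forall>i j. 0 < P$i$j \<and> P$i$j < 1"
    and Q01: "\<forall>i j. 0 < Q$i$j \<and> Q$i$j < 1"
    and Pst: "col_stochastic P" and Qst: "col_stochastic Q"
    and eps: "\<epsilon> > 0"
    and ratio: "\<forall>i j. exp (-\<epsilon>) \<le> P$i$j / Q$i$j \<and> P$i$j / Q$i$j \<le> exp \<epsilon>"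
  shows "max_eigenvalue_is P 1 \<and> max_eigenvalue_is Q 1 \<and>
    (\<forall>u v :: real^'n. (\<forall>i. u$i > 0) \<longrightarrow> (\<forall>i. v$i > 0) \<longrightarrow> P *v u = u \<longrightarrow> Q *v v = v \<longrightarrow>
       proj_dist u v \<le> 2 * \<epsilon> / (1 - min (birkhoff_tau P) (birkhoff_tau Q)))"
proof (intro conjI allI impI)
  have Pp: "\<forall>i j. P$i$j > 0" and Qp: "\<forall>i j. Q$i$j > 0" using P01 Q01 by auto
  have two: "\<exists>i j :: 'n. i \<noteq> j" using two_idx[OF P01 Pst] .
  show "max_eigenvalue_is P 1" using Pp Pst by (intro max_eig) (auto simp: less_imp_le)
  show "max_eigenvalue_is Q 1" using Qp Qst by (intro max_eig) (auto simp: less_imp_le)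
  fix u v :: "real^'n"
  assume up: "\<forall>i. u$i > 0" and vp: "\<forall>i. v$i > 0" and Pu: "P *v u = u" and Qv: "Q *v v = v"
  define d where "d = proj_dist u v"
  note tP = theta_props[OF Pp two] and tQ = theta_props[OF Qp two]
  have bP: "proj_dist (P *v u) (P *v v) \<le> birkhoff_tau P * d"
    unfolding birkhoff_tau_def d_def by (rule birkhoff[OF Pp tP(3) tP(1) tP(2) up vp])
  have bQ: "proj_dist (Q *v u) (Q *v v) \<le> birkhoff_tau Q * d"
    unfolding birkhoff_tau_def d_def by (rule birkhoff[OF Qp tQ(3) tQ(1) tQ(2) up vp])
  have ltP: "birkhoff_tau P < 1" unfolding birkhoff_tau_def by (rule tau_lt1[OF tP(1)])
  have ltQ: "birkhoff_tau Q < 1" unfolding birkhoff_tau_def by (rule tau_lt1[OF tQ(1)])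
  have dP: "d \<le> birkhoff_tau P * d + 2 * \<epsilon>"
  proof -
    have "d = proj_dist (P *v u) (Q *v v)" using Pu Qv d_def by simp
    also have "\<dots> \<le> proj_dist (P *v u) (P *v v) + proj_dist (P *v v) (Q *v v)"
      by (rule pd_tri) (use mv_pos[OF Pp up] mv_pos[OF Pp vp] mv_pos[OF Qp vp] in auto)
    also have "\<dots> \<le> birkhoff_tau P * d + 2 * \<epsilon>" using bP pd_PQ[OF Pp Qp vp ratio] by linarith
    finally show ?thesis .
  qed
  have dQ: "d \<le> birkhoff_tau Q * d + 2 * \<epsilon>"
  proof -
    have "d = proj_dist (P *v u) (Q *v v)" using Pu Qv d_def by simp
    also have "\<dots> \<le> proj_dist (P *v u) (Q *v u) + proj_dist (Q *v u) (Q *v v)"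
      by (rule pd_tri) (use mv_pos[OF Pp up] mv_pos[OF Qp up] mv_pos[OF Qp vp] in auto)
    also have "\<dots> \<le> 2 * \<epsilon> + birkhoff_tau Q * d" using bQ pd_PQ[OF Pp Qp up ratio] by linarith
    finally show ?thesis by simp
  qed
  define t where "t = min (birkhoff_tau P) (birkhoff_tau Q)"
  have t1: "t < 1" unfolding t_def using ltP ltQ by simp
  have "d \<le> t * d + 2 * \<epsilon>" unfolding t_def using dP dQ by (cases "birkhoff_tau P \<le> birkhoff_tau Q") auto
  hence "d * (1 - t) \<le> 2 * \<epsilon>" by (simp add: algebra_simps)
  hence "d \<le> 2 * \<epsilon> / (1 - t)" using t1 by (simp add: le_divide_eq)
  thus "proj_dist u v \<le> 2 * \<epsilon> / (1 - min (birkhoff_tau P) (birkhoff_tau Q))" unfolding d_def t_def .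
qed


end
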